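(* Let $F$ be an $F_\sigma$ subset of $[0,1]$ with $0\in F$, and let $k\geq 3$ be an integer. Then there exist non-empty, convex and closed subsets $A_1,A_2,\dots,A_k\subset\mathbb R^3$ such that $$F=\{\alpha\in[0,1]:P_{A_k}^\alpha P_{A_{k-1}}^\alpha\cdots P_{A_1}^\alpha\text{ has a fixed point}\}.$$
   Context: For a non-empty, convex, closed subset $A$ of a real Hilbert space $H$ (here $H=\mathbb R^3$ with the Euclidean inner product), $P_A:H\to A$ denotes the metric (nearest-point) projection onto $A$. For $\alpha\in[0,1]$, the $\alpha$-relaxed projection onto $A$ is the map $P_A^\alpha:H\to H$, $P_A^\alpha(x)=\alpha P_A(x)+(1-\alpha)x$. Compositions are written as products. *)

theory Defs
  imports "HOL-Analysis.Analysis"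
begin

definition relaxed_proj :: "real \<Rightarrow> ('a::euclidean_space) set \<Rightarrow> 'a \<Rightarrow> 'a" where
  "relaxed_proj \<alpha> A x = \<alpha> *\<^sub>R closest_point A x + (1 - \<alpha>) *\<^sub>R x"

text \<open>comp_relaxed \<alpha> A n = P_{A n}^\<alpha> \<circ> ... \<circ> P_{A 1}^\<alpha> (A 1 applied first).\<close>
fun comp_relaxed :: "real \<Rightarrow> (nat \<Rightarrow> ('a::euclidean_space) set) \<Rightarrow> nat \<Rightarrow> 'a \<Rightarrow> 'a" where
  "comp_relaxed \<alpha> A 0 = id"
| "comp_relaxed \<alpha> A (Suc n) = relaxed_proj \<alpha> (A (Suc n)) \<circ> comp_relaxed \<alpha> A n"

end

theory Submission
  imports Defs
begin

lemma vec3_eq: "(x::real^3) = y \<longleftrightarrow> x$1 = y$1 \<and> x$2 = y$2 \<and> x$3 = y$3"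
  by (simp add: vec_eq_iff forall_3)

lemma inner3: "inner (x::real^3) y = x$1*y$1 + x$2*y$2 + x$3*y$3"
  by (simp add: inner_vec_def sum_3)

lemma cp_VI:
  fixes S :: "'a::euclidean_space set"
  assumes "convex S" "closed S" "y \<in> S" "\<forall>z\<in>S. inner (x - y) (z - y) \<le> 0"
  shows "closest_point S x = y"
proof -
  have "\<forall>z\<in>S. dist x y \<le> dist x z"
  proof
    fix z assume "z\<in>S"
    have eq: "x - z = (x - y) - (z - y)" by simp
    have "inner (x - z) (x - z) = inner (x-y) (x-y) + inner (z-y) (z-y) - 2 * inner (x-y) (z-y)"
      unfolding eq by (simp add: inner_diff inner_commute)
    moreover have "inner (z-y) (z-y) \<ge> 0" by simp
    moreover have "inner (x-y) (z-y) \<le> 0" using assms(4) \<open>z\<in>S\<close> by auto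
    ultimately have "inner (x-y) (x-y) \<le> inner (x - z) (x - z)" by linarith
    then show "dist x y \<le> dist x z" by (simp add: dist_norm norm_le)
  qed
  then show ?thesis using closest_point_unique[OF assms(1,2,3)] by metis
qed

definition e3 :: "real^3" where "e3 = vector [0,0,1]"
definition bb :: "real^3" where "bb = vector [4,0,0]"
definition cc :: "real^3" where "cc = vector [3,2,0]"
definition L1 :: "(real^3) set" where "L1 = {x. x$1 = 0 \<and> x$2 = 0}"
definition L2 :: "(real^3) set" where "L2 = {x. x$1 = 4 \<and> x$2 = 0}"

lemma L1_cc: "closed L1" "convex L1" "L1 \<noteq> {}"
proof -
  show "closed L1" unfolding L1_def
    by (intro closed_Collect_conj closed_Collect_eq continuous_intros)
  show "convex L1" unfolding L1_def convex_def by auto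
  have "0 \<in> L1" unfolding L1_def by simp
  then show "L1 \<noteq> {}" by auto
qed

lemma L2_cc: "closed L2" "convex L2" "L2 \<noteq> {}"
proof -
  show "closed L2" unfolding L2_def
    by (intro closed_Collect_conj closed_Collect_eq continuous_intros)
  show "convex L2" unfolding L2_def convex_def by (auto simp: algebra_simps)
  have "bb \<in> L2" unfolding L2_def bb_def by simp
  then show "L2 \<noteq> {}" by auto
qed

lemma P1: "closest_point L1 x = (x$3) *\<^sub>R e3"
  by (rule cp_VI[OF L1_cc(2,1)]) (auto simp: L1_def e3_def inner3)

lemma P2: "closest_point L2 x = bb + (x$3) *\<^sub>R e3"
  by (rule cp_VI[OF L2_cc(2,1)]) (auto simp: L2_def e3_def bb_def inner3)

lemma relaxed_UNIV: "relaxed_proj \<alpha> UNIV = id"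
  by (rule ext) (simp add: relaxed_proj_def closest_point_self algebra_simps)

lemma comp_ge3:
  assumes "\<forall>i>3. A i = UNIV"
  shows "comp_relaxed \<alpha> A (n+3) = comp_relaxed \<alpha> A 3"
proof (induction n)
  case 0 then show ?case by simp
next
  case (Suc n)
  have "Suc n + 3 = Suc (n+3)" by simp
  then have "comp_relaxed \<alpha> A (Suc n + 3) = relaxed_proj \<alpha> (A (Suc (n+3))) \<circ> comp_relaxed \<alpha> A (n+3)"
    by (simp only: comp_relaxed.simps)
  also have "A (Suc (n+3)) = UNIV" using assms by auto
  finally show ?case using Suc by (simp add: relaxed_UNIV)
qed

definition qq :: "real \<Rightarrow> real^3" where "qq \<alpha> = (1/(2-\<alpha>)) *\<^sub>R bb"
definition ee :: "real \<Rightarrow> real^3" where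
  "ee \<alpha> = cc + (1/norm(qq \<alpha> - cc)) *\<^sub>R (qq \<alpha> - cc)"

lemma rr_ge: "norm (qq \<alpha> - cc) \<ge> 2"
proof -
  have "(qq \<alpha> - cc)$2 = -2" by (simp add: qq_def bb_def cc_def)
  then show ?thesis using component_le_norm_cart[of "qq \<alpha> - cc" 2] by simp
qed

lemma ee3: "(ee \<alpha>)$3 = 0" by (simp add: ee_def qq_def bb_def cc_def)

lemma ee_unit: "norm (ee \<alpha> - cc) = 1"
proof -
  have "qq \<alpha> - cc \<noteq> 0" using rr_ge[of \<alpha>] by auto
  then show ?thesis by (simp add: ee_def)
qed

lemma nz: "norm ((1/(2-x)) *\<^sub>R bb - cc) \<noteq> 0"
  using rr_ge[of x] unfolding qq_def by linarith

lemma ee_cont: "continuous_on {0..1} ee"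
  unfolding ee_def qq_def
  by (intro continuous_intros) (use nz in auto)

lemma ee_inj: "inj_on ee {0..1}"
proof
  fix a b :: real assume a: "a \<in> {0..1}" and b: "b \<in> {0..1}" and eq: "ee a = ee b"
  define ra where "ra = norm (qq a - cc)"
  define rb where "rb = norm (qq b - cc)"
  have ra: "ra \<ge> 2" and rb: "rb \<ge> 2" using rr_ge ra_def rb_def by auto
  have ea: "ee a = cc + (1/ra) *\<^sub>R (qq a - cc)" by (simp add: ee_def ra_def)
  have eb: "ee b = cc + (1/rb) *\<^sub>R (qq b - cc)" by (simp add: ee_def rb_def)
  have "(ee a)$2 = (ee b)$2" using eq by simp
  then have "-2/ra = -2/rb" unfolding ea eb by (simp add: qq_def bb_def cc_def)
  then have rab: "ra = rb" using ra rb by (simp add: field_simps)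
  have "(ee a)$1 = (ee b)$1" using eq by simp
  then have "(4/(2-a) - 3)/ra = (4/(2-b) - 3)/ra"
    unfolding ea eb rab by (simp add: qq_def bb_def cc_def)
  then have "4/(2-a) = 4/(2-b)" using ra by (simp add: field_simps)
  then show "a = b" using a b by (simp add: field_simps)
qed

lemma ee_VI:
  assumes "norm (p - cc) \<le> 1"
  shows "inner (qq \<alpha> - ee \<alpha>) (p - ee \<alpha>) \<le> 0"
proof -
  define r where "r = norm (qq \<alpha> - cc)"
  have r: "r \<ge> 2" using rr_ge r_def by auto
  have e: "ee \<alpha> - cc = (1/r) *\<^sub>R (qq \<alpha> - cc)" by (simp add: ee_def r_def)
  have "qq \<alpha> - cc = r *\<^sub>R (ee \<alpha> - cc)" using r by (simp add: e)
  then have d: "qq \<alpha> - ee \<alpha> = (r - 1) *\<^sub>R (ee \<alpha> - cc)" by (simp add: algebra_simps)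
  have "inner (ee \<alpha> - cc) (p - cc) \<le> norm (ee \<alpha> - cc) * norm (p - cc)" by (rule norm_cauchy_schwarz)
  also have "\<dots> \<le> 1" using assms ee_unit by simp
  finally have cs: "inner (ee \<alpha> - cc) (p - cc) \<le> 1" .
  have "inner (ee \<alpha> - cc) (ee \<alpha> - cc) = 1" using ee_unit[of \<alpha>] by (simp add: power2_norm_eq_inner[symmetric])
  have pe: "p - ee \<alpha> = (p - cc) - (ee \<alpha> - cc)" by simp
  have "inner (ee \<alpha> - cc) (p - ee \<alpha>) = inner (ee \<alpha> - cc) (p - cc) - inner (ee \<alpha> - cc) (ee \<alpha> - cc)"
    unfolding pe by (rule inner_diff_right)
  then have "inner (ee \<alpha> - cc) (p - ee \<alpha>) \<le> 0"
    using cs \<open>inner (ee \<alpha> - cc) (ee \<alpha> - cc) = 1\<close> by simp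
  then show ?thesis unfolding d using r by (simp add: mult_nonneg_nonpos)
qed

definition hz :: "real^3 \<Rightarrow> real^3" where "hz x = x - (x$3) *\<^sub>R e3"
definition FF :: "(nat \<Rightarrow> real set) \<Rightarrow> nat \<Rightarrow> real set" where
  "FF C n = insert 0 (\<Union>j\<le>n. C j \<inter> {0..1})"
definition dd :: "(nat \<Rightarrow> real set) \<Rightarrow> nat \<Rightarrow> real \<Rightarrow> real" where
  "dd C n \<beta> = (SOME d. d > 0 \<and> (\<forall>\<alpha>\<in>FF C n. d \<le> dist (ee \<beta>) (ee \<alpha>)))"
definition del :: "(nat \<Rightarrow> real set) \<Rightarrow> nat \<Rightarrow> real \<Rightarrow> real" where
  "del C n \<beta> = min (1/(real n+1)) ((dd C n \<beta>)^2/2)"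
definition HH :: "(nat \<Rightarrow> real set) \<Rightarrow> nat \<Rightarrow> real \<Rightarrow> real^3 \<Rightarrow> real" where
  "HH C n \<beta> x = (real n / del C n \<beta>) * (inner (x - cc) (ee \<beta> - cc) - 1 + del C n \<beta>)"
definition A3 :: "(nat \<Rightarrow> real set) \<Rightarrow> (real^3) set" where
  "A3 C = {x. norm (hz x - cc) \<le> 1 \<and> 0 \<le> x$3 \<and>
     (\<forall>n \<beta>. \<beta> \<in> {0..1} \<and> \<beta> \<notin> FF C n \<longrightarrow> HH C n \<beta> x \<le> x$3)}"

lemma hz_comp [simp]: "(hz x)$1 = x$1" "(hz x)$2 = x$2" "(hz x)$3 = 0"
  by (simp_all add: hz_def e3_def)

lemma hz_add_e3 [simp]: "p$3 = 0 \<Longrightarrow> hz (p + z *\<^sub>R e3) = p"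
  by (simp add: vec3_eq e3_def)

lemma e3_comp [simp]: "e3$1 = 0" "e3$2 = 0" "e3$3 = 1" by (simp_all add: e3_def)
lemma cc_comp [simp]: "cc$3 = 0" by (simp add: cc_def)

lemma FF_sub: "FF C n \<subseteq> {0..1}" by (auto simp: FF_def)
lemma FF_mono: "m \<le> n \<Longrightarrow> FF C m \<subseteq> FF C n" by (auto simp: FF_def) (metis atMost_iff le_trans)
lemma FF_compact: assumes "\<And>n. closed (C n)" shows "compact (FF C n)"
proof -
  have "closed (FF C n)" unfolding FF_def using assms
    by (intro closed_insert closed_UN closed_Int) auto
  moreover have "bounded (FF C n)" using FF_sub bounded_closed_interval bounded_subset by metis
  ultimately show ?thesis using compact_eq_bounded_closed by blast
qed

lemma dd_prop:
  assumes "\<And>n. closed (C n)" "\<beta> \<in> {0..1}" "\<beta> \<notin> FF C n"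
  shows "dd C n \<beta> > 0 \<and> (\<forall>\<alpha>\<in>FF C n. dd C n \<beta> \<le> dist (ee \<beta>) (ee \<alpha>))"
proof -
  have "compact (ee ` FF C n)"
    using compact_continuous_image[OF continuous_on_subset[OF ee_cont FF_sub] FF_compact[OF assms(1)]] .
  then have cl: "closed (ee ` FF C n)" by (rule compact_imp_closed)
  have "ee \<beta> \<notin> ee ` FF C n"
  proof
    assume "ee \<beta> \<in> ee ` FF C n"
    then obtain x where x: "x \<in> FF C n" "ee \<beta> = ee x" by auto
    then have "x \<in> {0..1}" using FF_sub[of C n] by blast
    then have "\<beta> = x" using ee_inj x(2) assms(2) unfolding inj_on_def by blast
    then show False using x(1) assms(3) by simp
  qed
  from separate_point_closed[OF cl this] obtain d where "d > 0" "\<forall>x\<in>ee ` FF C n. d \<le> dist (ee \<beta>) x" by auto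
  then have "\<exists>d. d > 0 \<and> (\<forall>\<alpha>\<in>FF C n. d \<le> dist (ee \<beta>) (ee \<alpha>))" by auto
  then show ?thesis unfolding dd_def by (rule someI_ex)
qed

lemma del_prop:
  assumes "\<And>n. closed (C n)" "\<beta> \<in> {0..1}" "\<beta> \<notin> FF C n"
  shows "del C n \<beta> > 0" "del C n \<beta> \<le> 1/(real n+1)"
    "\<And>\<alpha>. \<alpha>\<in>FF C n \<Longrightarrow> del C n \<beta> \<le> (dist (ee \<beta>) (ee \<alpha>))^2/2"
proof -
  note d = dd_prop[OF assms]
  show "del C n \<beta> > 0" using d by (simp add: del_def)
  show "del C n \<beta> \<le> 1/(real n+1)" by (simp add: del_def)
  fix \<alpha> assume "\<alpha>\<in>FF C n"
  then have "dd C n \<beta> \<le> dist (ee \<beta>) (ee \<alpha>)" using d by auto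
  then have "(dd C n \<beta>)^2 \<le> (dist (ee \<beta>) (ee \<alpha>))^2" using d by (intro power_mono) auto
  then show "del C n \<beta> \<le> (dist (ee \<beta>) (ee \<alpha>))^2/2" by (simp add: del_def)
qed

lemma inner_hz: "inner (x - cc) (ee \<beta> - cc) = inner (hz x - cc) (ee \<beta> - cc)"
  by (simp add: inner3 ee3)

lemma inner_ee: "inner (ee \<alpha> - cc) (ee \<beta> - cc) = 1 - (dist (ee \<alpha>) (ee \<beta>))^2/2"
proof -
  have eq: "ee \<alpha> - ee \<beta> = (ee \<alpha> - cc) - (ee \<beta> - cc)" by simp
  have "(dist (ee \<alpha>) (ee \<beta>))^2 = inner (ee \<alpha> - cc) (ee \<alpha> - cc) + inner (ee \<beta> - cc) (ee \<beta> - cc)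
     - 2 * inner (ee \<alpha> - cc) (ee \<beta> - cc)"
    unfolding dist_norm power2_norm_eq_inner eq by (simp add: inner_diff inner_commute)
  moreover have "inner (ee \<gamma> - cc) (ee \<gamma> - cc) = 1" for \<gamma>
    using ee_unit[of \<gamma>] by (simp add: power2_norm_eq_inner[symmetric])
  ultimately show ?thesis by (simp add: field_simps)
qed

lemma inner_le_norm1: assumes "norm (p - cc) \<le> \<rho>" shows "inner (p - cc) (ee \<beta> - cc) \<le> \<rho>"
proof -
  have "inner (p - cc) (ee \<beta> - cc) \<le> norm (p - cc) * norm (ee \<beta> - cc)" by (rule norm_cauchy_schwarz)
  then show ?thesis using assms ee_unit by simp
qed

context
  fixes C :: "nat \<Rightarrow> real set"
  assumes Ccl: "\<And>n. closed (C n)"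
begin

lemma HH_le:
  assumes "\<beta> \<in> {0..1}" "\<beta> \<notin> FF C n" "norm (hz x - cc) \<le> \<rho>" "\<rho> \<le> 1 - del C n \<beta>"
  shows "HH C n \<beta> x \<le> 0"
proof -
  have "inner (x - cc) (ee \<beta> - cc) \<le> \<rho>" using inner_hz[of x \<beta>] inner_le_norm1[OF assms(3)] by simp
  then have "inner (x - cc) (ee \<beta> - cc) - 1 + del C n \<beta> \<le> 0" using assms(4) by linarith
  moreover have "real n / del C n \<beta> \<ge> 0" using del_prop[OF Ccl assms(1,2)] by simp
  ultimately show ?thesis unfolding HH_def by (metis mult_nonneg_nonpos)
qed

lemma HH_le_n:
  assumes "\<beta> \<in> {0..1}" "\<beta> \<notin> FF C n" "norm (hz x - cc) \<le> 1"
  shows "HH C n \<beta> x \<le> real n"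
proof -
  have "inner (x - cc) (ee \<beta> - cc) \<le> 1" using inner_hz[of x \<beta>] inner_le_norm1[OF assms(3)] by simp
  then have "inner (x - cc) (ee \<beta> - cc) - 1 + del C n \<beta> \<le> del C n \<beta>" by linarith
  moreover have dp: "del C n \<beta> > 0" using del_prop[OF Ccl assms(1,2)] by simp
  ultimately have "HH C n \<beta> x \<le> (real n / del C n \<beta>) * del C n \<beta>"
    unfolding HH_def by (intro mult_left_mono) auto
  then show ?thesis using dp by simp
qed

lemma HH_self:
  assumes "\<beta> \<in> {0..1}" "\<beta> \<notin> FF C n" "hz x = ee \<beta>"
  shows "HH C n \<beta> x = real n"
proof -
  have "inner (x - cc) (ee \<beta> - cc) = 1" using inner_hz[of x \<beta>] inner_ee[of \<beta> \<beta>] assms(3) by simp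
  moreover have dp: "del C n \<beta> > 0" using del_prop[OF Ccl assms(1,2)] by simp
  ultimately show ?thesis unfolding HH_def by simp
qed

lemma HH_F:
  assumes "\<beta> \<in> {0..1}" "\<beta> \<notin> FF C n" "\<alpha> \<in> FF C n" "hz x = ee \<alpha>"
  shows "HH C n \<beta> x \<le> 0"
proof -
  have "inner (x - cc) (ee \<beta> - cc) = 1 - (dist (ee \<alpha>) (ee \<beta>))^2/2"
    using inner_hz[of x \<beta>] inner_ee[of \<alpha> \<beta>] assms(4) by simp
  moreover have "del C n \<beta> \<le> (dist (ee \<beta>) (ee \<alpha>))^2/2" using del_prop(3)[OF Ccl assms(1,2,3)] .
  ultimately have "inner (x - cc) (ee \<beta> - cc) - 1 + del C n \<beta> \<le> 0" by (simp add: dist_commute)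
  moreover have "real n / del C n \<beta> \<ge> 0" using del_prop[OF Ccl assms(1,2)] by simp
  ultimately show ?thesis unfolding HH_def by (metis mult_nonneg_nonpos)
qed

end

lemma hz_lin: "hz (u *\<^sub>R x + v *\<^sub>R y) = u *\<^sub>R hz x + v *\<^sub>R hz y"
  by (simp add: vec3_eq)

lemma HH_aff:
  assumes "u + v = 1"
  shows "HH C n \<beta> (u *\<^sub>R x + v *\<^sub>R y) = u * HH C n \<beta> x + v * HH C n \<beta> y"
proof -
  have v: "v = 1 - u" using assms by simp
  have eq: "u *\<^sub>R x + v *\<^sub>R y - cc = u *\<^sub>R (x - cc) + v *\<^sub>R (y - cc)"
    unfolding v by (simp add: algebra_simps)
  have i: "inner (u *\<^sub>R x + v *\<^sub>R y - cc) (ee \<beta> - cc) = u * inner (x - cc) (ee \<beta> - cc) + v * inner (y - cc) (ee \<beta> - cc)"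
    by (simp only: eq inner_add_left inner_scaleR_left)
  have g: "K * (u * a + v * b - 1 + d) = u * (K * (a - 1 + d)) + v * (K * (b - 1 + d))" for K a b d :: real
    unfolding v by (simp add: algebra_simps)
  show ?thesis unfolding HH_def i by (rule g)
qed

lemma A3_convex: "convex (A3 C)"
  unfolding convex_def
proof (intro ballI allI impI)
  fix x y :: "real^3" and u v :: real assume x: "x \<in> A3 C" and y: "y \<in> A3 C" and uv: "0 \<le> u" "0 \<le> v" "u + v = 1"
  have v: "v = 1 - u" using uv by simp
  have eq: "hz (u *\<^sub>R x + v *\<^sub>R y) - cc = u *\<^sub>R (hz x - cc) + v *\<^sub>R (hz y - cc)"
    unfolding hz_lin v by (simp add: algebra_simps)
  have "norm (hz (u *\<^sub>R x + v *\<^sub>R y) - cc) \<le> u * norm (hz x - cc) + v * norm (hz y - cc)"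
    unfolding eq using uv by (metis (no_types) abs_of_nonneg norm_scaleR norm_triangle_ineq)
  also have "\<dots> \<le> u * 1 + v * 1"
    using x y uv unfolding A3_def by (intro add_mono mult_left_mono) auto
  finally have n: "norm (hz (u *\<^sub>R x + v *\<^sub>R y) - cc) \<le> 1" using uv by simp
  have z: "0 \<le> (u *\<^sub>R x + v *\<^sub>R y)$3" using x y uv unfolding A3_def by simp
  have h: "HH C n \<beta> (u *\<^sub>R x + v *\<^sub>R y) \<le> (u *\<^sub>R x + v *\<^sub>R y)$3"
    if "\<beta> \<in> {0..1} \<and> \<beta> \<notin> FF C n" for n \<beta>
  proof -
    have "HH C n \<beta> x \<le> x$3" "HH C n \<beta> y \<le> y$3" using x y that unfolding A3_def by auto
    then have "u * HH C n \<beta> x + v * HH C n \<beta> y \<le> u * x$3 + v * y$3"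
      using uv by (intro add_mono mult_left_mono) auto
    then show ?thesis using HH_aff[of u v C n \<beta> x y] uv by simp
  qed
  show "u *\<^sub>R x + v *\<^sub>R y \<in> A3 C" unfolding A3_def using n z h by auto
qed

lemma A3_closed: "closed (A3 C)"
proof -
  have c: "closed {x. HH C n \<beta> x \<le> x$3}" for n \<beta>
    unfolding HH_def by (intro closed_Collect_le continuous_intros)
  have "closed {x::real^3. \<beta> \<in> {0..1} \<and> \<beta> \<notin> FF C n \<longrightarrow> HH C n \<beta> x \<le> x$3}" for n \<beta>
    by (cases "\<beta> \<in> {0..1} \<and> \<beta> \<notin> FF C n") (auto simp: c)
  then have "closed {x::real^3. \<forall>n \<beta>. \<beta> \<in> {0..1} \<and> \<beta> \<notin> FF C n \<longrightarrow> HH C n \<beta> x \<le> x$3}"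
    by (intro closed_Collect_all)
  moreover have "closed {x::real^3. norm (hz x - cc) \<le> 1}"
    unfolding hz_def by (intro closed_Collect_le continuous_intros)
  moreover have "closed {x::real^3. 0 \<le> x$3}"
    by (intro closed_Collect_le continuous_intros)
  ultimately show ?thesis unfolding A3_def
    by (intro closed_Collect_conj) auto
qed

context
  fixes C :: "nat \<Rightarrow> real set"
  assumes Ccl: "\<And>n. closed (C n)"
begin

lemma E1:
  assumes "\<alpha> \<in> FF C m"
  shows "ee \<alpha> + real m *\<^sub>R e3 \<in> A3 C"
proof -
  let ?x = "ee \<alpha> + real m *\<^sub>R e3"
  have hx: "hz ?x = ee \<alpha>" by (simp add: ee3)
  have x3: "?x$3 = real m" by (simp add: ee3)
  have "HH C n \<beta> ?x \<le> real m" if "\<beta> \<in> {0..1}" "\<beta> \<notin> FF C n" for n \<beta>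
  proof (cases "m \<le> n")
    case True
    then have an: "\<alpha> \<in> FF C n" using FF_mono assms by blast
    show ?thesis using HH_F[OF Ccl that an hx] by simp
  next
    case False
    have "HH C n \<beta> ?x \<le> real n" using HH_le_n[OF Ccl that] hx ee_unit by simp
    then show ?thesis using False by simp
  qed
  then show ?thesis unfolding A3_def using hx x3 ee_unit by auto
qed

lemma E2:
  assumes "x \<in> A3 C" "hz x = ee \<alpha>" "\<alpha> \<in> {0..1}"
  shows "\<exists>n. \<alpha> \<in> FF C n"
proof (rule ccontr)
  assume "\<not> ?thesis"
  then have nF: "\<alpha> \<notin> FF C n" for n by auto
  define n where "n = nat \<lceil>x$3\<rceil> + 1"
  have "HH C n \<alpha> x \<le> x$3" using assms(1,3) nF unfolding A3_def by auto
  moreover have "HH C n \<alpha> x = real n" using HH_self[OF Ccl assms(3) nF assms(2)] .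
  moreover have "real n > x$3" unfolding n_def by linarith
  ultimately show False by simp
qed

lemma E3:
  assumes "p$3 = 0" "norm (p - cc) < 1"
  shows "\<exists>z. p + z *\<^sub>R e3 \<in> A3 C"
proof -
  define \<rho> where "\<rho> = norm (p - cc)"
  have r: "\<rho> < 1" "0 \<le> \<rho>" using assms \<rho>_def by auto
  define N where "N = nat \<lceil>1/(1-\<rho>)\<rceil>"
  have N: "1/(real N+1) \<le> 1 - \<rho>"
  proof -
    have "1/(1-\<rho>) \<le> real N + 1" unfolding N_def by linarith
    then have "1 \<le> (real N + 1) * (1 - \<rho>)" using r by (simp add: field_simps)
    then show ?thesis using r by (simp add: field_simps)
  qed
  let ?x = "p + real N *\<^sub>R e3"
  have hx: "hz ?x = p" using assms by simp
  have x3: "?x$3 = real N" using assms by simp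
  have "HH C n \<beta> ?x \<le> real N" if "\<beta> \<in> {0..1}" "\<beta> \<notin> FF C n" for n \<beta>
  proof (cases "N \<le> n")
    case True
    have "del C n \<beta> \<le> 1/(real n+1)" using del_prop(2)[OF Ccl that] .
    also have "\<dots> \<le> 1/(real N+1)" using True by (simp add: frac_le)
    finally have "\<rho> \<le> 1 - del C n \<beta>" using N by linarith
    then have "HH C n \<beta> ?x \<le> 0" using HH_le[OF Ccl that, of ?x \<rho>] hx \<rho>_def by simp
    then show ?thesis by simp
  next
    case False
    have "HH C n \<beta> ?x \<le> real n" using HH_le_n[OF Ccl that] hx r \<rho>_def by simp
    then show ?thesis using False by simp
  qed
  then have "?x \<in> A3 C" unfolding A3_def using hx x3 r \<rho>_def by auto
  then show ?thesis by blast
qed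

end

lemma A3_ne: "(\<And>n. closed (C n)) \<Longrightarrow> A3 C \<noteq> {}"
  using E1[of C 0 0] by (auto simp: FF_def)

definition TT :: "(nat \<Rightarrow> real set) \<Rightarrow> real \<Rightarrow> real^3 \<Rightarrow> real^3" where
  "TT C \<alpha> x = relaxed_proj \<alpha> (A3 C) (relaxed_proj \<alpha> L2 (relaxed_proj \<alpha> L1 x))"

lemma R12_comp:
  "(relaxed_proj \<alpha> L2 (relaxed_proj \<alpha> L1 x))$1 = \<alpha> * 4 + (1-\<alpha>)^2 * x$1"
  "(relaxed_proj \<alpha> L2 (relaxed_proj \<alpha> L1 x))$2 = (1-\<alpha>)^2 * x$2"
  "(relaxed_proj \<alpha> L2 (relaxed_proj \<alpha> L1 x))$3 = x$3"
  by (simp_all add: relaxed_proj_def P1 P2 bb_def e3_def power2_eq_square algebra_simps)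

lemma qq_comp [simp]: "(qq \<alpha>)$1 = 4/(2-\<alpha>)" "(qq \<alpha>)$2 = 0" "(qq \<alpha>)$3 = 0"
  by (simp_all add: qq_def bb_def)

lemma lim_lemma:
  fixes A B :: real
  assumes "\<And>l. 0 \<le> l \<Longrightarrow> l < 1 \<Longrightarrow> A + l * B \<le> 0"
  shows "A + B \<le> 0"
proof (rule ccontr)
  assume c: "\<not> ?thesis"
  have A: "A \<le> 0" using assms[of 0] by simp
  then have B: "B > 0" using c by simp
  show False
  proof (cases "(A+B)/(2*B) < 1")
    case True
    define l where "l = 1 - (A+B)/(2*B)"
    have "0 < l" "l < 1" using True c B unfolding l_def by (auto simp: field_simps)
    then have "A + l * B \<le> 0" using assms by simp
    moreover have "A + l * B = (A + B)/2" unfolding l_def using B by (simp add: field_simps)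
    ultimately show False using c by simp
  next
    case False
    then have "A + B \<ge> 2*B" using B by (simp add: field_simps)
    then show False using A B by simp
  qed
qed

context
  fixes C :: "nat \<Rightarrow> real set"
  assumes Ccl: "\<And>n. closed (C n)"
begin

lemma FP_back:
  assumes a: "0 < \<alpha>" "\<alpha> \<le> 1" and mem: "ee \<alpha> + z *\<^sub>R e3 \<in> A3 C"
  shows "\<exists>x. TT C \<alpha> x = x"
proof -
  define t where "t = 1 - \<alpha>"
  define D where "D = 1 + t + t^2"
  have t: "0 \<le> t" "t < 1" using a t_def by auto
  have D: "D > 0" unfolding D_def using t by (simp add: add_pos_nonneg)
  have al: "\<alpha> = 1 - t" using t_def by simp
  define x where "x = (1/D) *\<^sub>R (ee \<alpha> + t *\<^sub>R bb) + z *\<^sub>R e3"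
  define y where "y = relaxed_proj \<alpha> L2 (relaxed_proj \<alpha> L1 x)"
  define e1 where "e1 = (ee \<alpha>)$1"
  define e2 where "e2 = (ee \<alpha>)$2"
  have x1: "x$1 = (e1 + t*4)/D" "x$2 = e2/D" "x$3 = z"
    by (simp_all add: x_def e1_def e2_def ee3 bb_def add_divide_distrib)
  have y: "y$1 = \<alpha> * 4 + t^2 * x$1" "y$2 = t^2 * x$2" "y$3 = z"
    unfolding y_def using R12_comp x1 t_def by auto
  let ?a = "ee \<alpha> + z *\<^sub>R e3"
  have ac: "?a$1 = e1" "?a$2 = e2" "?a$3 = z" by (simp_all add: e1_def e2_def ee3)
  have dy: "(y - ?a)$1 = (4 - (1+t)*e1)/D" "(y - ?a)$2 = - ((1+t)*e2)/D" "(y - ?a)$3 = 0"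
  proof -
    have "(\<alpha> * 4 + t^2 * ((e1 + t*4)/D)) - e1 = (4 - (1+t)*e1)/D"
      using D unfolding al D_def by (simp add: field_simps) (simp add: algebra_simps power2_eq_square power3_eq_cube)
    then show "(y - ?a)$1 = (4 - (1+t)*e1)/D" using y x1 ac by simp
    have "t^2 * (e2/D) - e2 = - ((1+t)*e2)/D"
      using D unfolding D_def by (simp add: field_simps)
    then show "(y - ?a)$2 = - ((1+t)*e2)/D" using y x1 ac by simp
    show "(y - ?a)$3 = 0" using y ac by simp
  qed
  have cp: "closest_point (A3 C) y = ?a"
  proof (rule cp_VI[OF A3_convex A3_closed mem], intro ballI)
    fix w assume w: "w \<in> A3 C"
    have n: "norm (hz w - cc) \<le> 1" using w unfolding A3_def by auto
    have vi: "inner (qq \<alpha> - ee \<alpha>) (hz w - ee \<alpha>) \<le> 0" using ee_VI[OF n] .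
    have s: "2 - \<alpha> = 1 + t" using t_def by simp
    have "inner (y - ?a) (w - ?a) = ((1+t)/D) * inner (qq \<alpha> - ee \<alpha>) (hz w - ee \<alpha>)"
      unfolding inner3 dy using s t D
      by (simp add: e1_def[symmetric] e2_def[symmetric] ee3 field_simps) (simp add: al algebra_simps)
    also have "\<dots> \<le> 0" using vi D t by (intro mult_nonneg_nonpos) auto
    finally show "inner (y - ?a) (w - ?a) \<le> 0" .
  qed
  have i1: "\<alpha> * e1 + t * (\<alpha>*4 + t^2 * ((e1 + t*4)/D)) = (e1 + t*4)/D"
    using D unfolding al D_def by (simp add: field_simps) (simp add: algebra_simps power2_eq_square power3_eq_cube)
  have i2: "\<alpha> * e2 + t * (t^2 * (e2/D)) = e2/D"
    using D unfolding al D_def by (simp add: field_simps) (simp add: algebra_simps power2_eq_square power3_eq_cube)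
  have T: "TT C \<alpha> x = \<alpha> *\<^sub>R ?a + t *\<^sub>R y"
  proof -
    have "TT C \<alpha> x = relaxed_proj \<alpha> (A3 C) y" by (simp add: TT_def y_def)
    then show ?thesis unfolding relaxed_proj_def cp t_def by simp
  qed
  have "(TT C \<alpha> x)$1 = x$1" unfolding T using i1 y(1) x1(1) ac(1) by simp
  moreover have "(TT C \<alpha> x)$2 = x$2" unfolding T using i2 y(2) x1(2) ac(2) by simp
  moreover have "(TT C \<alpha> x)$3 = x$3" unfolding T using y(3) x1(3) ac(3) t_def by (simp add: distrib_right[symmetric])
  ultimately have "TT C \<alpha> x = x" unfolding vec3_eq by simp
  then show ?thesis by blast
qed

lemma FP_fwd:
  assumes a: "0 < \<alpha>" "\<alpha> \<le> 1" and fx: "TT C \<alpha> x = x"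
  shows "\<exists>n. \<alpha> \<in> FF C n"
proof -
  define t where "t = 1 - \<alpha>"
  define D where "D = 1 + t + t^2"
  have t: "0 \<le> t" "t < 1" using a t_def by auto
  have D: "D > 0" unfolding D_def using t by (simp add: add_pos_nonneg)
  have al: "\<alpha> = 1 - t" using t_def by simp
  define y where "y = relaxed_proj \<alpha> L2 (relaxed_proj \<alpha> L1 x)"
  define a where "a = closest_point (A3 C) y"
  have aA: "a \<in> A3 C" unfolding a_def using closest_point_in_set[OF A3_closed A3_ne[OF Ccl]] .
  have xe: "x = \<alpha> *\<^sub>R a + t *\<^sub>R y"
  proof -
    have "TT C \<alpha> x = relaxed_proj \<alpha> (A3 C) y" by (simp add: TT_def y_def)
    then show ?thesis using fx unfolding relaxed_proj_def a_def t_def by simp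
  qed
  have y: "y$1 = \<alpha> * 4 + t^2 * x$1" "y$2 = t^2 * x$2" "y$3 = x$3"
    unfolding y_def using R12_comp t_def by auto
  have xc: "x$1 = \<alpha> * a$1 + t * y$1" "x$2 = \<alpha> * a$2 + t * y$2" "x$3 = \<alpha> * a$3 + t * y$3"
    using arg_cong[where f="\<lambda>v. v$1", OF xe] arg_cong[where f="\<lambda>v. v$2", OF xe]
      arg_cong[where f="\<lambda>v. v$3", OF xe] by simp_all
  have a3: "a$3 = x$3"
  proof -
    have "\<alpha> * x$3 = \<alpha> * a$3" using xc(3) y(3) unfolding t_def by (simp add: algebra_simps)
    then show ?thesis using a by simp
  qed
  have x1: "x$1 = (a$1 + t*4)/D"
  proof -
    have "x$1 * (1 - t^3) = \<alpha> * (a$1 + t*4)" using xc(1) y(1)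
      by (simp add: algebra_simps power2_eq_square power3_eq_cube)
    then have "x$1 * (\<alpha> * D) = \<alpha> * (a$1 + t*4)" unfolding al D_def
      by (simp add: algebra_simps power2_eq_square power3_eq_cube)
    then have "x$1 * D = a$1 + t*4" using a by (simp add: ac_simps)
    then show ?thesis using D by (simp add: field_simps)
  qed
  have x2: "x$2 = a$2/D"
  proof -
    have "x$2 * (1 - t^3) = \<alpha> * a$2" using xc(2) y(2)
      by (simp add: algebra_simps power2_eq_square power3_eq_cube)
    then have "x$2 * (\<alpha> * D) = \<alpha> * a$2" unfolding al D_def
      by (simp add: algebra_simps power2_eq_square power3_eq_cube)
    then have "x$2 * D = a$2" using a by (simp add: ac_simps)
    then show ?thesis using D by (simp add: field_simps)
  qed
  define e1 where "e1 = a$1"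
  define e2 where "e2 = a$2"
  have dy: "(y - a)$1 = (4 - (1+t)*e1)/D" "(y - a)$2 = - ((1+t)*e2)/D" "(y - a)$3 = 0"
  proof -
    have "(\<alpha> * 4 + t^2 * ((e1 + t*4)/D)) - e1 = (4 - (1+t)*e1)/D"
      using D unfolding al D_def by (simp add: field_simps) (simp add: algebra_simps power2_eq_square power3_eq_cube)
    then show "(y - a)$1 = (4 - (1+t)*e1)/D" using y x1 e1_def by simp
    have "t^2 * (e2/D) - e2 = - ((1+t)*e2)/D"
      using D unfolding D_def by (simp add: field_simps)
    then show "(y - a)$2 = - ((1+t)*e2)/D" using y x2 e2_def by simp
    show "(y - a)$3 = 0" using y a3 by simp
  qed
  have s: "2 - \<alpha> = 1 + t" using t_def by simp
  have key: "inner (qq \<alpha> - hz a) (hz w - hz a) \<le> 0" if w: "w \<in> A3 C" for w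
  proof -
    have "inner (y - a) (w - a) = ((1+t)/D) * inner (qq \<alpha> - hz a) (hz w - hz a)"
      unfolding inner3 dy using s t D
      by (simp add: e1_def[symmetric] e2_def[symmetric] field_simps) (simp add: al algebra_simps)
    moreover have "inner (y - a) (w - a) \<le> 0"
      unfolding a_def by (rule closest_point_dot[OF A3_convex A3_closed w])
    ultimately have le: "((1+t)/D) * inner (qq \<alpha> - hz a) (hz w - hz a) \<le> 0" by linarith
    have pos: "(1+t)/D > 0" using D t by simp
    show ?thesis using le pos by (metis mult_pos_pos not_le)
  qed
  have key2: "inner (qq \<alpha> - hz a) (p - hz a) \<le> 0" if pp: "p$3 = 0" "norm (p - cc) < 1" for p
  proof -
    obtain z where "p + z *\<^sub>R e3 \<in> A3 C" using E3[of C, OF Ccl pp] by blast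
    from key[OF this] show ?thesis using pp(1) by simp
  qed
  define ha where "ha = hz a"
  have lim: "inner (qq \<alpha> - ha) (cc - ha) + l * inner (qq \<alpha> - ha) (ee \<alpha> - cc) \<le> 0"
    if "0 \<le> l" "l < 1" for l
  proof -
    let ?p = "cc + l *\<^sub>R (ee \<alpha> - cc)"
    have "?p$3 = 0" by (simp add: ee3)
    moreover have "norm (?p - cc) < 1" using that ee_unit by simp
    ultimately have "inner (qq \<alpha> - ha) (?p - ha) \<le> 0" using key2 ha_def by blast
    moreover have "?p - ha = (cc - ha) + l *\<^sub>R (ee \<alpha> - cc)" by simp
    ultimately show ?thesis by (simp only: inner_add_right inner_scaleR_right)
  qed
  have "inner (qq \<alpha> - ha) (cc - ha) + inner (qq \<alpha> - ha) (ee \<alpha> - cc) \<le> 0"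
    using lim_lemma[OF lim] by simp
  moreover have "ee \<alpha> - ha = (cc - ha) + (ee \<alpha> - cc)" by simp
  ultimately have v1: "inner (qq \<alpha> - ha) (ee \<alpha> - ha) \<le> 0" by (simp only: inner_add_right)
  have "norm (ha - cc) \<le> 1" using aA unfolding A3_def ha_def by auto
  then have v2: "inner (qq \<alpha> - ee \<alpha>) (ha - ee \<alpha>) \<le> 0" by (rule ee_VI)
  have "inner (ee \<alpha> - ha) (ee \<alpha> - ha) = inner (qq \<alpha> - ha) (ee \<alpha> - ha) + inner (qq \<alpha> - ee \<alpha>) (ha - ee \<alpha>)"
    by (simp add: inner_diff inner_commute)
  then have "inner (ee \<alpha> - ha) (ee \<alpha> - ha) \<le> 0" using v1 v2 by linarith
  then have "inner (ee \<alpha> - ha) (ee \<alpha> - ha) = 0" using inner_ge_zero[of "ee \<alpha> - ha"] by linarith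
  then have "ha = ee \<alpha>" by simp
  then show ?thesis using E2[of C, OF Ccl aA] a ha_def by auto
qed

end

theorem proposition2:
  fixes F :: "real set" and k :: nat
  assumes "fsigma F" and "F \<subseteq> {0..1}" and "0 \<in> F" and "k \<ge> 3"
  shows "\<exists>A :: nat \<Rightarrow> (real ^ 3) set.
           (\<forall>i\<in>{1..k}. A i \<noteq> {} \<and> convex (A i) \<and> closed (A i)) \<and>
           F = {\<alpha> \<in> {0..1}. \<exists>x. comp_relaxed \<alpha> A k x = x}"
proof -
  from assms(1) obtain C :: "nat \<Rightarrow> real set" where FU: "F = \<Union>(C ` UNIV)" and Ccl: "\<And>n. closed (C n)"
  proof (cases rule: fsigma.cases)
    case (1 Fa)
    then show ?thesis using that[of Fa] by simp
  qed
  define A where "A = (\<lambda>i::nat. if i = 1 then L1 else if i = 2 then L2 else if i = 3 then A3 C else UNIV)"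
  have props: "\<forall>i\<in>{1..k}. A i \<noteq> {} \<and> convex (A i) \<and> closed (A i)"
    unfolding A_def using L1_cc L2_cc A3_ne[of C, OF Ccl] A3_convex A3_closed by auto
  have comp: "comp_relaxed \<alpha> A k = TT C \<alpha>" for \<alpha>
  proof -
    have k: "k = (k - 3) + 3" using assms(4) by simp
    have "\<forall>i>3. A i = UNIV" unfolding A_def by auto
    then have "comp_relaxed \<alpha> A k = comp_relaxed \<alpha> A 3" using comp_ge3 k by metis
    also have "\<dots> = TT C \<alpha>"
      by (rule ext) (simp add: numeral_3_eq_3 A_def TT_def)
    finally show ?thesis .
  qed
  have Fchar: "\<alpha> \<in> F \<longleftrightarrow> \<alpha> \<in> {0..1} \<and> (\<exists>n. \<alpha> \<in> FF C n)" for \<alpha>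
  proof
    assume a: "\<alpha> \<in> F"
    then obtain j where "\<alpha> \<in> C j" using FU by auto
    moreover have "\<alpha> \<in> {0..1}" using a assms(2) by auto
    ultimately have "\<alpha> \<in> FF C j" unfolding FF_def by auto
    then show "\<alpha> \<in> {0..1} \<and> (\<exists>n. \<alpha> \<in> FF C n)" using \<open>\<alpha> \<in> {0..1}\<close> by blast
  next
    assume "\<alpha> \<in> {0..1} \<and> (\<exists>n. \<alpha> \<in> FF C n)"
    then obtain n where "\<alpha> \<in> FF C n" by auto
    then show "\<alpha> \<in> F" unfolding FF_def using FU assms(3) by auto
  qed
  have T0: "TT C 0 x = x" for x by (simp add: TT_def relaxed_proj_def)
  have "F = {\<alpha> \<in> {0..1}. \<exists>x. comp_relaxed \<alpha> A k x = x}"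
  proof (intro set_eqI iffI)
    fix \<alpha> assume a: "\<alpha> \<in> F"
    then have a01: "\<alpha> \<in> {0..1}" and "\<exists>n. \<alpha> \<in> FF C n" using Fchar by auto
    then obtain m where m: "\<alpha> \<in> FF C m" by auto
    have "\<exists>x. TT C \<alpha> x = x"
    proof (cases "\<alpha> = 0")
      case True then show ?thesis using T0 by auto
    next
      case False
      then have "0 < \<alpha>" "\<alpha> \<le> 1" using a01 by auto
      then show ?thesis using FP_back[OF Ccl _ _ E1[of C, OF Ccl m]] by blast
    qed
    then show "\<alpha> \<in> {\<alpha> \<in> {0..1}. \<exists>x. comp_relaxed \<alpha> A k x = x}" using a01 comp by auto
  next
    fix \<alpha> assume "\<alpha> \<in> {\<alpha> \<in> {0..1}. \<exists>x. comp_relaxed \<alpha> A k x = x}"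
    then have a01: "\<alpha> \<in> {0..1}" and "\<exists>x. TT C \<alpha> x = x" using comp by auto
    then obtain x where fx: "TT C \<alpha> x = x" by auto
    show "\<alpha> \<in> F"
    proof (cases "\<alpha> = 0")
      case True then show ?thesis using assms(3) by simp
    next
      case False
      then have "0 < \<alpha>" "\<alpha> \<le> 1" using a01 by auto
      then show ?thesis using FP_fwd[OF Ccl _ _ fx] Fchar a01 by blast
    qed
  qed
  then show ?thesis using props by blast
qed

end
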